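(* Let $\mathbf L$ be an algebraic lattice with an equa-interior operator $\eta$ satisfying property (I9). Let $x$, $a_i$ and $z_i$ ($i\in I$, $I$ an arbitrary index set) be coatoms of $\mathbf L$ with $x\wedge z_i\le a_i$ properly for all $i\in I$. If $\bigwedge_{i\in I}a_i\not\le x$, then $\bigwedge_{i\in I}z_i\not\le x$.
   Context: An equa-interior operator on an algebraic lattice $\mathbf L$ is a map $\eta:L\to L$ such that for all $x,y,z\in L$: (I1) $\eta(x)\le x$; (I2) $x\ge y$ implies $\eta(x)\ge\eta(y)$; (I3) $\eta^2(x)=\eta(x)$; (I4) $\eta(1)=1$; (I5) if $\eta(x)=u$ for all $x\in X\subseteq L$ then $\eta(\bigvee X)=u$; (I6) $\eta(x)\vee(y\wedge z)=(\eta(x)\vee y)\wedge(\eta(x)\vee z)$; (I7) the image $\eta(L)$ is the complete join subsemilattice of $L$ generated by the elements of $\eta(L)$ that are compact in $\mathbf L$; (I8) there is a compact element $w\in L$ with $\eta(w)=w$ such that the interval $[w,1]$ is isomorphic to the congruence lattice of a join semilattice with $0$. Define $\tau(y)=\bigvee\{u\in L:\eta(u)=\eta(y)\}$. Property (I9): for any index set $J$ and elements $x,c,z_j$ ($j\in J$) of $L$, if $\eta(x)\le c$ and $\bigwedge_{j\in J}\tau(z_j)\le\tau(c)$, then $\eta(\eta(x)\vee\bigwedge_{j\in J}\tau(x\wedge z_j))\le c$. For coatoms, "$x\wedge z\le a$ properly" means $x\wedge z\le a$ while $x\not\le a$ and $z\not\le a$. *)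

theory Defs
  imports Main
begin

text \<open>The lattice L is the type 'a (a complete lattice); L = UNIV.\<close>

definition compact_el :: "'a::complete_lattice \<Rightarrow> bool" where
  "compact_el c \<longleftrightarrow> (\<forall>A. c \<le> Sup A \<longrightarrow> (\<exists>F. finite F \<and> F \<subseteq> A \<and> c \<le> Sup F))"

definition algebraic_lattice :: "'a::complete_lattice itself \<Rightarrow> bool" where
  "algebraic_lattice _ \<longleftrightarrow> (\<forall>x::'a. x = Sup {c. compact_el c \<and> c \<le> x})"

definition coatom :: "'a::complete_lattice \<Rightarrow> bool" where
  "coatom x \<longleftrightarrow> x < top \<and> (\<forall>y. x < y \<longrightarrow> y = top)"

definition properly_below :: "'a::complete_lattice \<Rightarrow> 'a \<Rightarrow> 'a \<Rightarrow> bool" where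
  "properly_below x z a \<longleftrightarrow> inf x z \<le> a \<and> \<not> x \<le> a \<and> \<not> z \<le> a"

definition join_semilattice_0 :: "'b set \<Rightarrow> ('b \<Rightarrow> 'b \<Rightarrow> 'b) \<Rightarrow> 'b \<Rightarrow> bool" where
  "join_semilattice_0 S j e \<longleftrightarrow>
     (\<forall>x\<in>S. \<forall>y\<in>S. j x y \<in> S) \<and> e \<in> S \<and>
     (\<forall>x\<in>S. \<forall>y\<in>S. \<forall>z\<in>S. j (j x y) z = j x (j y z)) \<and>
     (\<forall>x\<in>S. \<forall>y\<in>S. j x y = j y x) \<and>
     (\<forall>x\<in>S. j x x = x) \<and>
     (\<forall>x\<in>S. j e x = x)"

text \<open>Congruences of the algebra (S, j, e): equivalence relations on S compatible with j
  (compatibility with the constant e is automatic).\<close>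
definition sl_congruences :: "'b set \<Rightarrow> ('b \<Rightarrow> 'b \<Rightarrow> 'b) \<Rightarrow> ('b \<times> 'b) set set" where
  "sl_congruences S j = {\<theta>. equiv S \<theta> \<and>
     (\<forall>x1 y1 x2 y2. (x1, y1) \<in> \<theta> \<longrightarrow> (x2, y2) \<in> \<theta> \<longrightarrow> (j x1 x2, j y1 y2) \<in> \<theta>)}"

definition tau :: "('a::complete_lattice \<Rightarrow> 'a) \<Rightarrow> 'a \<Rightarrow> 'a" where
  "tau \<eta> y = Sup {u. \<eta> u = \<eta> y}"

definition equa_interior :: "('a::complete_lattice \<Rightarrow> 'a) \<Rightarrow> bool" where
  "equa_interior \<eta> \<longleftrightarrow>
     (\<forall>x. \<eta> x \<le> x) \<and>
     (\<forall>x y. y \<le> x \<longrightarrow> \<eta> y \<le> \<eta> x) \<and>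
     (\<forall>x. \<eta> (\<eta> x) = \<eta> x) \<and>
     \<eta> top = top \<and>
     (\<forall>X u. X \<noteq> {} \<longrightarrow> (\<forall>x\<in>X. \<eta> x = u) \<longrightarrow> \<eta> (Sup X) = u) \<and>
     (\<forall>x y z. sup (\<eta> x) (inf y z) = inf (sup (\<eta> x) y) (sup (\<eta> x) z)) \<and>
     range \<eta> = {Sup A | A. A \<subseteq> {c \<in> range \<eta>. compact_el c}} \<and>
     (\<exists>w. compact_el w \<and> \<eta> w = w \<and>
        (\<exists>(S::'a set) j e f. join_semilattice_0 S j e \<and>
           bij_betw f {w..} (sl_congruences S j) \<and>
           (\<forall>x\<in>{w..}. \<forall>y\<in>{w..}. x \<le> y \<longleftrightarrow> f x \<subseteq> f y)))"

definition prop_I9 :: "('a::complete_lattice \<Rightarrow> 'a) \<Rightarrow> bool" where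
  "prop_I9 \<eta> \<longleftrightarrow>
     (\<forall>(J::'a set) (zz::'a \<Rightarrow> 'a) x c.
        \<eta> x \<le> c \<longrightarrow> (INF j\<in>J. tau \<eta> (zz j)) \<le> tau \<eta> c \<longrightarrow>
        \<eta> (sup (\<eta> x) (INF j\<in>J. tau \<eta> (inf x (zz j)))) \<le> c)"

end

theory Submission
  imports Defs
begin

lemma EI1:
  assumes "equa_interior \<eta>"
  shows "\<forall>x. \<eta> x \<le> x"
  using assms unfolding equa_interior_def by (elim conjE) assumption

lemma EI2:
  assumes "equa_interior \<eta>"
  shows "\<forall>x y. y \<le> x \<longrightarrow> \<eta> y \<le> \<eta> x"
  using assms unfolding equa_interior_def by (elim conjE) assumption

lemma EI3:
  assumes "equa_interior \<eta>"
  shows "\<forall>x. \<eta> (\<eta> x) = \<eta> x"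
  using assms unfolding equa_interior_def by (elim conjE) assumption

lemma EI4:
  assumes "equa_interior \<eta>"
  shows "\<eta> top = top"
  using assms unfolding equa_interior_def by (elim conjE) assumption

lemma EI5:
  assumes "equa_interior \<eta>"
  shows "\<forall>X u. X \<noteq> {} \<longrightarrow> (\<forall>x\<in>X. \<eta> x = u) \<longrightarrow> \<eta> (Sup X) = u"
  using assms unfolding equa_interior_def by (elim conjE) assumption

lemma EI6:
  assumes "equa_interior \<eta>"
  shows "\<forall>x y z. sup (\<eta> x) (inf y z) = inf (sup (\<eta> x) y) (sup (\<eta> x) z)"
  using assms unfolding equa_interior_def by (elim conjE) assumption

lemmas EI = EI1 EI2 EI3 EI4 EI5 EI6

lemma eta_tau:
  assumes "equa_interior \<eta>"
  shows "\<eta> (tau \<eta> y) = \<eta> y"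
proof -
  have "\<forall>X u. X \<noteq> {} \<longrightarrow> (\<forall>x\<in>X. \<eta> x = u) \<longrightarrow> \<eta> (Sup X) = u"
    by (rule EI5[OF assms])
  from this[rule_format, of "{u. \<eta> u = \<eta> y}" "\<eta> y"] show ?thesis
    unfolding tau_def by blast
qed

lemma le_tau: "\<eta> u = \<eta> y \<Longrightarrow> u \<le> tau \<eta> y"
  unfolding tau_def by (rule Sup_upper) simp

lemma tau_coatom:
  assumes "equa_interior \<eta>" "coatom y"
  shows "tau \<eta> y = y"
proof -
  have le: "y \<le> tau \<eta> y" by (rule le_tau) simp
  have ex: "\<forall>x. \<eta> x \<le> x" "\<eta> top = top" using EI[OF assms(1)] by auto
  have "tau \<eta> y \<noteq> top"
  proof
    assume "tau \<eta> y = top"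
    then have "\<eta> y = top" using eta_tau[OF assms(1), of y] ex by simp
    then show False using ex(1)[rule_format, of y] assms(2) unfolding coatom_def
      by (metis top.extremum_unique less_le)
  qed
  then show ?thesis using le assms(2) unfolding coatom_def by (metis less_le)
qed

theorem theorem7p6:
  fixes \<eta> :: "'a::complete_lattice \<Rightarrow> 'a"
    and x :: 'a and a z :: "'i \<Rightarrow> 'a" and I :: "'i set"
  assumes "algebraic_lattice TYPE('a)"
    and "equa_interior \<eta>"
    and "prop_I9 \<eta>"
    and "coatom x"
    and "\<forall>i\<in>I. coatom (a i) \<and> coatom (z i)"
    and "\<forall>i\<in>I. properly_below x (z i) (a i)"
    and "\<not> (INF i\<in>I. a i) \<le> x"
  shows "\<not> (INF i\<in>I. z i) \<le> x"
proof
  assume H: "(INF i\<in>I. z i) \<le> x"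
  have E1: "\<forall>x. \<eta> x \<le> x" and E2: "\<forall>x y. y \<le> x \<longrightarrow> \<eta> y \<le> \<eta> x"
    and E3: "\<forall>x. \<eta> (\<eta> x) = \<eta> x"
    and E6: "\<forall>x y z. sup (\<eta> x) (inf y z) = inf (sup (\<eta> x) y) (sup (\<eta> x) z)"
    using EI[OF assms(2)] by auto
  have A: "a i \<le> tau \<eta> (inf x (z i))" if i: "i \<in> I" for i
  proof -
    have ca: "coatom (a i)" and cz: "coatom (z i)" and p: "properly_below x (z i) (a i)"
      using assms(5,6) i by auto
    have d: "sup (\<eta> (a i)) (inf x (z i)) = inf (sup (\<eta> (a i)) x) (sup (\<eta> (a i)) (z i))"
      using E6 by blast
    have lhs: "sup (\<eta> (a i)) (inf x (z i)) \<le> a i"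
      using p E1 unfolding properly_below_def by (simp add: le_supI)
    have "\<eta> (a i) \<le> x"
    proof (rule ccontr)
      assume n: "\<not> \<eta> (a i) \<le> x"
      then have "x < sup (\<eta> (a i)) x" by (simp add: less_le_not_le)
      then have "sup (\<eta> (a i)) x = top" using assms(4) unfolding coatom_def by blast
      then have "z i \<le> a i" using d lhs by (metis inf_top_left le_supE)
      then show False using p unfolding properly_below_def by blast
    qed
    moreover have "\<eta> (a i) \<le> z i"
    proof (rule ccontr)
      assume n: "\<not> \<eta> (a i) \<le> z i"
      then have "z i < sup (\<eta> (a i)) (z i)" by (simp add: less_le_not_le)
      then have "sup (\<eta> (a i)) (z i) = top" using cz unfolding coatom_def by blast
      then have "x \<le> a i" using d lhs by (metis inf_top_right le_supE)
      then show False using p unfolding properly_below_def by blast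
    qed
    ultimately have "\<eta> (a i) \<le> inf x (z i)" by simp
    then have "\<eta> (\<eta> (a i)) \<le> \<eta> (inf x (z i))" using E2 by blast
    moreover have "\<eta> (inf x (z i)) \<le> \<eta> (a i)"
      using E2 p unfolding properly_below_def by blast
    ultimately have "\<eta> (a i) = \<eta> (inf x (z i))" using E3 by (metis order.antisym)
    then show ?thesis by (rule le_tau)
  qed
  have tx: "tau \<eta> x = x" using tau_coatom[OF assms(2,4)] .
  have txe: "tau \<eta> (\<eta> x) = tau \<eta> x" unfolding tau_def using E3 by simp
  have tz: "(INF j\<in>z ` I. tau \<eta> (id j)) = (INF i\<in>I. z i)"
    using tau_coatom[OF assms(2)] assms(5) by (simp add: image_comp)
  define V where "V = (INF j\<in>z ` I. tau \<eta> (inf x (id j)))"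
  have V: "V = (INF i\<in>I. tau \<eta> (inf x (z i)))" unfolding V_def by (simp add: image_comp)
  have I9: "\<And>J zz x0 c. \<eta> x0 \<le> c \<Longrightarrow> (INF j\<in>(J::'a set). tau \<eta> (zz j)) \<le> tau \<eta> c \<Longrightarrow>
        \<eta> (sup (\<eta> x0) (INF j\<in>J. tau \<eta> (inf x0 (zz j)))) \<le> c"
    by (rule assms(3)[unfolded prop_I9_def, rule_format])
  have "\<eta> (sup (\<eta> x) V) \<le> \<eta> x"
    unfolding V_def by (rule I9) (use H tz tx txe in simp_all)
  moreover have "\<eta> x \<le> \<eta> (sup (\<eta> x) V)" using E2 E3 by (metis sup_ge1)
  ultimately have "\<eta> (sup (\<eta> x) V) = \<eta> x" by (rule order.antisym)
  then have "sup (\<eta> x) V \<le> x" using le_tau tx by metis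
  then have "V \<le> x" by simp
  moreover have "(INF i\<in>I. a i) \<le> V" unfolding V using A by (meson INF_greatest INF_lower2)
  ultimately show False using assms(7) by (meson order.trans)
qed

end
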